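(* Let $\hat q,\hat p$ be $n\times n$ parametric matrices and $M$ an $n\times n$ $(\hat q,\hat p)$-Manin matrix over $\mathfrak R$ which is invertible and such that $\mathrm{cdet}_{\hat q}(M)$ is invertible in $\mathfrak R$. Then for all $1\le i,j\le n$, $$(M^{-1})_{ij}=\varepsilon(\hat p,i^c\oplus i)^{-1}\,\varepsilon(\hat q,j^c\oplus j)\,\mathrm{cdet}_{\hat q}(M)^{-1}\,\mathrm{cdet}_{\hat q}(M_{j^c i^c}),$$ where for $a\in\{1,\dots,n\}$, $a^c$ denotes the increasing multi-index $(1,\dots,\hat a,\dots,n)$ obtained by deleting $a$, and $a^c\oplus a=(1,\dots,\hat a,\dots,n,a)$.
   Context: $\mathfrak R$ is an associative unital algebra over $\mathbb C$. A parametric $n\times n$ matrix is a matrix $\hat q=(q_{ij})$ of nonzero complex numbers with $q_{ij}q_{ji}=1$, $q_{ii}=1$. An $n\times n$ matrix $M$ over $\mathfrak R$ is a $(\hat q,\hat p)$-Manin matrix if $M_{ik}M_{jk}=q_{ji}M_{jk}M_{ik}$ for $i<j$ and all $k$, and $M_{ik}M_{jl}-q_{ji}p_{kl}M_{jl}M_{ik}+p_{kl}M_{il}M_{jk}-q_{ji}M_{jk}M_{il}=0$ for $i<j$, $k<l$. For a multi-index $I=(i_1,\dots,i_r)$, $\varepsilon(\hat q,I)=0$ if two entries coincide, otherwise $\varepsilon(\hat q,I)=\prod_{s<t,\ i_s>i_t}(-q_{i_si_t})$. For increasing $I=(i_1<\dots<i_r)$ and $\sigma\in S_r$, $\varepsilon(\hat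 q,I,\sigma)=\prod_{s<t,\ \sigma(s)>\sigma(t)}(-q_{i_{\sigma(s)}i_{\sigma(t)}})$. For increasing $I$ and any multi-index $J=(j_1,\dots,j_r)$, $\mathrm{cdet}_{\hat q}(M_{IJ})=\sum_{\sigma\in S_r}\varepsilon(\hat q,I,\sigma)M_{i_{\sigma(1)},j_1}\cdots M_{i_{\sigma(r)},j_r}$; $\mathrm{cdet}_{\hat q}(M)$ is the case $I=J=(1,\dots,n)$. *)

theory Defs
  imports Complex_Main "HOL-Combinatorics.Permutations"
begin

text \<open>An associative unital algebra over the complex numbers is encoded as a ring
  (type class ring_1) together with a unital ring homomorphism from the complex
  numbers into its centre (the structure map).  Matrices are functions
  nat => nat => 'a, with indices ranging over 1..n.\<close>

definition complex_algebra_map :: "(complex \<Rightarrow> 'a::ring_1) \<Rightarrow> bool" where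
  "complex_algebra_map emb \<longleftrightarrow>
     (\<forall>x y. emb (x + y) = emb x + emb y) \<and>
     (\<forall>x y. emb (x * y) = emb x * emb y) \<and>
     emb 1 = 1 \<and>
     (\<forall>x r. emb x * r = r * emb x)"

definition param_matrix :: "nat \<Rightarrow> (nat \<Rightarrow> nat \<Rightarrow> complex) \<Rightarrow> bool" where
  "param_matrix n q \<longleftrightarrow>
     (\<forall>i\<in>{1..n}. \<forall>j\<in>{1..n}. q i j \<noteq> 0 \<and> q i j * q j i = 1) \<and>
     (\<forall>i\<in>{1..n}. q i i = 1)"

definition manin :: "(complex \<Rightarrow> 'a::ring_1) \<Rightarrow> nat \<Rightarrow> (nat \<Rightarrow> nat \<Rightarrow> complex)
    \<Rightarrow> (nat \<Rightarrow> nat \<Rightarrow> complex) \<Rightarrow> (nat \<Rightarrow> nat \<Rightarrow> 'a) \<Rightarrow> bool" where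
  "manin emb n q p M \<longleftrightarrow>
     (\<forall>i\<in>{1..n}. \<forall>j\<in>{1..n}. \<forall>k\<in>{1..n}. i < j \<longrightarrow>
        M i k * M j k = emb (q j i) * M j k * M i k) \<and>
     (\<forall>i\<in>{1..n}. \<forall>j\<in>{1..n}. \<forall>k\<in>{1..n}. \<forall>l\<in>{1..n}. i < j \<longrightarrow> k < l \<longrightarrow>
        M i k * M j l - emb (q j i * p k l) * M j l * M i k
          + emb (p k l) * M i l * M j k - emb (q j i) * M j k * M i l = 0)"

definition eps :: "(nat \<Rightarrow> nat \<Rightarrow> complex) \<Rightarrow> nat list \<Rightarrow> complex" where
  "eps q I = (if distinct I then
     (\<Prod>(s,t)\<in>{(s,t). s < t \<and> t < length I \<and> I!s > I!t}. - q (I!s) (I!t))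
   else 0)"

text \<open>epsilon(q, I, sigma) for increasing I and sigma a permutation of the positions.\<close>
definition eps_perm :: "(nat \<Rightarrow> nat \<Rightarrow> complex) \<Rightarrow> nat list \<Rightarrow> (nat \<Rightarrow> nat) \<Rightarrow> complex" where
  "eps_perm q I \<sigma> =
     (\<Prod>(s,t)\<in>{(s,t). s < t \<and> t < length I \<and> \<sigma> s > \<sigma> t}. - q (I!(\<sigma> s)) (I!(\<sigma> t)))"

text \<open>Column determinant cdet_q(M_{IJ}) for increasing I and arbitrary J of the same length.\<close>
definition cdet :: "(complex \<Rightarrow> 'a::ring_1) \<Rightarrow> (nat \<Rightarrow> nat \<Rightarrow> complex) \<Rightarrow> (nat \<Rightarrow> nat \<Rightarrow> 'a)
    \<Rightarrow> nat list \<Rightarrow> nat list \<Rightarrow> 'a" where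
  "cdet emb q M I J =
     (\<Sum>\<sigma>\<in>{\<sigma>. \<sigma> permutes {..<length I}}.
        emb (eps_perm q I \<sigma>) * (\<Prod>s\<leftarrow>[0..<length I]. M (I!(\<sigma> s)) (J!s)))"

definition compl_idx :: "nat \<Rightarrow> nat \<Rightarrow> nat list" where
  "compl_idx n a = filter (\<lambda>x. x \<noteq> a) [1..<Suc n]"

definition inverse_mat :: "nat \<Rightarrow> (nat \<Rightarrow> nat \<Rightarrow> 'a::ring_1) \<Rightarrow> (nat \<Rightarrow> nat \<Rightarrow> 'a) \<Rightarrow> bool" where
  "inverse_mat n M N \<longleftrightarrow>
     (\<forall>i\<in>{1..n}. \<forall>j\<in>{1..n}.
        (\<Sum>k=1..n. M i k * N k j) = (if i = j then 1 else 0) \<and>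
        (\<Sum>k=1..n. N i k * M k j) = (if i = j then 1 else 0))"

end

theory Submission
  imports Defs "HOL-Combinatorics.Multiset_Permutations"
begin

definition cc :: "(nat \<Rightarrow> nat \<Rightarrow> complex) \<Rightarrow> nat \<Rightarrow> nat set \<Rightarrow> complex" where
  "cc q x S = (\<Prod>z\<in>{z\<in>S. z < x}. - q x z)"
definition ee :: "(nat \<Rightarrow> nat \<Rightarrow> complex) \<Rightarrow> nat \<Rightarrow> nat set \<Rightarrow> complex" where
  "ee q k S = (\<Prod>z\<in>{z\<in>S. k < z}. - q z k)"

primrec cd :: "(complex \<Rightarrow> 'a::ring_1) \<Rightarrow> (nat \<Rightarrow> nat \<Rightarrow> complex) \<Rightarrow> (nat \<Rightarrow> nat \<Rightarrow> 'a)
   \<Rightarrow> nat set \<Rightarrow> nat list \<Rightarrow> 'a" where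
  "cd emb q M S [] = 1"
| "cd emb q M S (j # J) = (\<Sum>x\<in>S. emb (cc q x S) * M x j * cd emb q M (S - {x}) J)"

locale cam =
  fixes emb :: "complex \<Rightarrow> 'a::ring_1"
  assumes cam: "complex_algebra_map emb"
begin

lemma emb_add: "emb (x + y) = emb x + emb y"
  using cam unfolding complex_algebra_map_def by blast
lemma emb_mult: "emb (x * y) = emb x * emb y"
  using cam unfolding complex_algebra_map_def by blast
lemma emb_1[simp]: "emb 1 = 1"
  using cam unfolding complex_algebra_map_def by blast
lemma emb_comm: "emb x * r = r * emb x"
  using cam unfolding complex_algebra_map_def by blast
lemma emb_0[simp]: "emb 0 = 0"
  using emb_add[of 0 0] by simp
lemma emb_minus: "emb (- x) = - emb x"
  using emb_add[of x "-x"] minus_unique[of "emb x" "emb (-x)"] by simp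
lemma emb_lcomm: "emb x * (r * s) = r * (emb x * s)"
  by (metis emb_comm mult.assoc)
lemma regroup: "emb A * u * (emb B * v * w) = emb (A * B) * (u * v) * w"
proof -
  have "emb A * u * (emb B * v * w) = emb A * (u * emb B) * v * w" by (simp add: mult.assoc)
  also have "\<dots> = emb A * (emb B * u) * v * w" by (simp only: emb_comm)
  finally show ?thesis by (simp add: mult.assoc emb_mult)
qed
lemma regroup2: "emb (A * B) * (u * v) = emb A * u * (emb B * v)"
proof -
  have "emb A * u * (emb B * v) = emb A * (u * emb B) * v" by (simp add: mult.assoc)
  also have "\<dots> = emb A * (emb B * u) * v" by (simp only: emb_comm)
  finally show ?thesis by (simp add: mult.assoc emb_mult)
qed

lemma emb_inv: "x \<noteq> 0 \<Longrightarrow> emb (inverse x) * emb x = 1"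
  by (metis emb_mult emb_1 left_inverse)

lemma sum_offdiag:
  fixes H :: "nat \<Rightarrow> nat \<Rightarrow> 'b::comm_monoid_add"
  assumes "finite S"
  shows "(\<Sum>x\<in>S. \<Sum>y\<in>S-{x}. H x y) = (\<Sum>(x,y)\<in>{(x,y)\<in>S\<times>S. x < y}. H x y + H y x)"
proof -
  let ?P = "{(x,y)\<in>S\<times>S. x < y}"
  have fP: "finite ?P" using assms by (auto intro: finite_subset[of _ "S\<times>S"])
  have "(\<Sum>x\<in>S. \<Sum>y\<in>S-{x}. H x y) = (\<Sum>(x,y)\<in>(SIGMA x:S. S-{x}). H x y)"
    using assms by (simp add: sum.Sigma)
  also have "(SIGMA x:S. S-{x}) = ?P \<union> prod.swap ` ?P" by auto
  also have "(\<Sum>(x,y)\<in>?P \<union> prod.swap ` ?P. H x y) = (\<Sum>(x,y)\<in>?P. H x y) + (\<Sum>(x,y)\<in>prod.swap ` ?P. H x y)"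
    by (rule sum.union_disjoint) (use fP in auto)
  also have "(\<Sum>(x,y)\<in>prod.swap ` ?P. H x y) = (\<Sum>(x,y)\<in>?P. H y x)"
    by (subst sum.reindex) (auto simp: inj_on_def)
  finally show ?thesis by (simp add: sum.distrib split_def)
qed

lemma sum_del_if:
  fixes f :: "nat \<Rightarrow> 'b::comm_monoid_add"
  shows "finite S \<Longrightarrow> (\<Sum>k\<in>S-{x}. f k) = (\<Sum>k\<in>S. if k = x then 0 else f k)"
  by (rule sum.mono_neutral_cong_left) auto

lemma sum_swap_offdiag:
  fixes F :: "nat \<Rightarrow> nat \<Rightarrow> 'b::comm_monoid_add"
  assumes "finite S"
  shows "(\<Sum>x\<in>S. \<Sum>k\<in>S-{x}. F x k) = (\<Sum>k\<in>S. \<Sum>x\<in>S-{k}. F x k)"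
proof -
  have "(\<Sum>x\<in>S. \<Sum>k\<in>S-{x}. F x k) = (\<Sum>x\<in>S. \<Sum>k\<in>S. if k = x then 0 else F x k)"
    using assms by (simp add: sum_del_if)
  also have "\<dots> = (\<Sum>k\<in>S. \<Sum>x\<in>S. if k = x then 0 else F x k)" by (rule sum.swap)
  also have "\<dots> = (\<Sum>k\<in>S. \<Sum>x\<in>S-{k}. F x k)"
    using assms by (simp add: sum_del_if eq_commute)
  finally show ?thesis .
qed

end

lemma cc_notin: "\<not> y < x \<Longrightarrow> cc q x (S - {y}) = cc q x S"
  unfolding cc_def by (rule arg_cong[where f="\<lambda>A. prod _ A"]) auto

lemma cc_in: assumes "finite S" "x \<in> S" "x < y"
  shows "cc q y S = - q y x * cc q y (S - {x})"
proof -
  have "{z\<in>S. z < y} = insert x {z\<in>S-{x}. z < y}" using assms by auto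
  then show ?thesis unfolding cc_def using assms by (simp add: prod.insert)
qed

lemma cc_pair: assumes "finite S" "x \<in> S" "y \<in> S" "x < y"
  shows "cc q y S * cc q x (S - {y}) = - q y x * (cc q x S * cc q y (S - {x}))"
  using assms by (simp add: cc_notin cc_in[of S x y q])

lemma ee_notin: "\<not> k < x \<Longrightarrow> ee q k (S - {x}) = ee q k S"
  unfolding ee_def by (rule arg_cong[where f="\<lambda>A. prod _ A"]) auto

lemma ee_in: assumes "finite S" "x \<in> S" "k < x"
  shows "ee q k S = - q x k * ee q k (S - {x})"
proof -
  have "{z\<in>S. k < z} = insert x {z\<in>S-{x}. k < z}" using assms by auto
  then show ?thesis unfolding ee_def using assms by simp
qed

lemma cc_ee: assumes "finite S" "x \<in> S" "k \<in> S" "x \<noteq> k"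
  shows "cc q x S * ee q k (S - {x}) = ee q k S * cc q x (S - {k})"
proof (cases "x < k")
  case True
  then show ?thesis by (simp add: cc_notin ee_notin)
next
  case False
  then have "k < x" using assms by auto
  then show ?thesis using assms by (simp add: cc_in[of S k x q] ee_in[of S x k q] cc_notin ee_notin)
qed

lemma eps_Nil[simp]: "eps q [] = 1"
  by (simp add: eps_def)

lemma eps_Cons:
  assumes d: "distinct (x # ys)"
  shows "eps q (x # ys) = cc q x (set ys) * eps q ys"
proof -
  define T where "T L = {(s,t). s < t \<and> t < length L \<and> L!s > L!t}" for L :: "nat list"
  define g where "g L = (\<lambda>(s,t). - q (L!s) (L!t))" for L :: "nat list"
  have eq: "eps q L = (if distinct L then prod (g L) (T L) else 0)" for L
    unfolding eps_def T_def g_def by simp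
  have fin: "finite (T L)" for L
    by (rule finite_subset[of _ "{..<length L} \<times> {..<length L}"]) (auto simp: T_def)
  let ?A = "{t. t < length ys \<and> ys!t < x}"
  have split: "T (x # ys) = (\<lambda>t. (0, Suc t)) ` ?A \<union> (\<lambda>(s,t). (Suc s, Suc t)) ` T ys"
  proof (rule set_eqI, rule iffI)
    fix st assume "st \<in> T (x # ys)"
    then obtain s t where st: "st = (s,t)" "s < t" "t < Suc (length ys)" "(x#ys)!s > (x#ys)!t"
      by (auto simp: T_def)
    then obtain t' where t': "t = Suc t'" by (cases t) auto
    show "st \<in> (\<lambda>t. (0, Suc t)) ` ?A \<union> (\<lambda>(s,t). (Suc s, Suc t)) ` T ys"
    proof (cases s)
      case 0
      then show ?thesis using st t' by auto
    next
      case (Suc s')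
      then have "(s', t') \<in> T ys" using st t' by (auto simp: T_def)
      then show ?thesis using st t' Suc by force
    qed
  next
    fix st assume "st \<in> (\<lambda>t. (0, Suc t)) ` ?A \<union> (\<lambda>(s,t). (Suc s, Suc t)) ` T ys"
    then show "st \<in> T (x # ys)" by (auto simp: T_def)
  qed
  have disj: "(\<lambda>t. (0, Suc t)) ` ?A \<inter> (\<lambda>(s,t). (Suc s, Suc t)) ` T ys = {}" by auto
  have p1: "prod (g (x # ys)) ((\<lambda>t. (0, Suc t)) ` ?A) = cc q x (set ys)"
  proof -
    have "prod (g (x # ys)) ((\<lambda>t. (0, Suc t)) ` ?A) = (\<Prod>t\<in>?A. - q x (ys!t))"
      by (subst prod.reindex) (auto simp: inj_on_def g_def)
    also have "\<dots> = (\<Prod>z\<in>(\<lambda>t. ys!t) ` ?A. - q x z)"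
      using d by (subst prod.reindex) (auto simp: inj_on_def nth_eq_iff_index_eq)
    also have "(\<lambda>t. ys!t) ` ?A = {z\<in>set ys. z < x}"
      by (auto simp: in_set_conv_nth)
    finally show ?thesis unfolding cc_def .
  qed
  have p2: "prod (g (x # ys)) ((\<lambda>(s,t). (Suc s, Suc t)) ` T ys) = prod (g ys) (T ys)"
    by (subst prod.reindex) (auto simp: inj_on_def g_def intro!: prod.cong)
  have "eps q (x # ys) = prod (g (x # ys)) (T (x # ys))" using d eq by simp
  also have "\<dots> = cc q x (set ys) * prod (g ys) (T ys)"
    unfolding split using fin[of ys] p1 p2
    by (subst prod.union_disjoint) (auto intro: finite_subset[OF _ fin[of "x#ys"]] simp: T_def)
  also have "prod (g ys) (T ys) = eps q ys" using d eq by simp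
  finally show ?thesis .
qed

lemma eps_snoc:
  "sorted_wrt (<) A \<Longrightarrow> x \<notin> set A \<Longrightarrow> eps q (A @ [x]) = ee q x (set A)"
proof (induction A)
  case Nil
  have "eps q [x] = cc q x {} * eps q []" using eps_Cons[of x "[]" q] by simp
  then show ?case by (simp add: cc_def ee_def)
next
  case (Cons a A)
  have d: "distinct (a # A @ [x])" using Cons.prems strict_sorted_iff[of "a # A"] by auto
  have gt: "\<forall>z\<in>set A. a < z" using Cons.prems by simp
  have "eps q ((a # A) @ [x]) = cc q a (insert x (set A)) * ee q x (set A)"
    using eps_Cons[OF d, of q] Cons by simp
  also have "cc q a (insert x (set A)) = (if x < a then - q a x else 1)"
  proof -
    have "{z\<in>insert x (set A). z < a} = (if x < a then {x} else {})" using gt by auto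
    then show ?thesis unfolding cc_def by simp
  qed
  also have "ee q x (set (a # A)) = (if x < a then - q a x else 1) * ee q x (set A)"
  proof -
    have "a \<notin> set A" using gt by auto
    moreover have "{z\<in>set (a # A). x < z} = (if x < a then insert a {z\<in>set A. x < z} else {z\<in>set A. x < z})"
      by auto
    ultimately show ?thesis unfolding ee_def by simp
  qed
  finally show ?case by simp
qed

context cam begin

lemma LS_cd:
  "finite S \<Longrightarrow> card S = length J \<Longrightarrow>
   (\<Sum>xs\<in>permutations_of_set S. emb (eps q xs) * prod_list (map (case_prod M) (zip xs J))) = cd emb q M S J"
proof (induction J arbitrary: S)
  case Nil
  then show ?case by simp
next
  case (Cons j J)
  have ne: "S \<noteq> {}" using Cons.prems(2) by (cases "S = {}") simp_all
  have "(\<Sum>xs\<in>permutations_of_set S. emb (eps q xs) * prod_list (map (case_prod M) (zip xs (j # J))))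
     = (\<Sum>x\<in>S. \<Sum>xs\<in>(\<lambda>xs. x # xs) ` permutations_of_set (S - {x}). emb (eps q xs) * prod_list (map (case_prod M) (zip xs (j # J))))"
    unfolding permutations_of_set_nonempty[OF ne]
    by (rule sum.UNION_disjoint) (use Cons.prems in auto)
  also have "\<dots> = (\<Sum>x\<in>S. emb (cc q x S) * M x j * cd emb q M (S - {x}) J)"
  proof (rule sum.cong[OF refl])
    fix x assume x: "x \<in> S"
    have "(\<Sum>xs\<in>(\<lambda>xs. x # xs) ` permutations_of_set (S - {x}). emb (eps q xs) * prod_list (map (case_prod M) (zip xs (j # J))))
       = (\<Sum>ys\<in>permutations_of_set (S - {x}). emb (eps q (x # ys)) * prod_list (map (case_prod M) (zip (x # ys) (j # J))))"
      by (subst sum.reindex) auto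
    also have "\<dots> = (\<Sum>ys\<in>permutations_of_set (S - {x}). emb (cc q x S) * M x j * (emb (eps q ys) * prod_list (map (case_prod M) (zip ys J))))"
    proof (rule sum.cong[OF refl])
      fix ys assume ys: "ys \<in> permutations_of_set (S - {x})"
      then have d: "distinct (x # ys)" and sy: "set ys = S - {x}" by (auto simp: permutations_of_set_def)
      have e: "eps q (x # ys) = cc q x S * eps q ys" using eps_Cons[OF d, of q] sy by (simp add: cc_notin)
      have pl: "prod_list (map (case_prod M) (zip (x # ys) (j # J))) = M x j * prod_list (map (case_prod M) (zip ys J))" by simp
      show "emb (eps q (x # ys)) * prod_list (map (case_prod M) (zip (x # ys) (j # J))) =
          emb (cc q x S) * M x j * (emb (eps q ys) * prod_list (map (case_prod M) (zip ys J)))"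
        unfolding e pl by (rule regroup2)
    qed
    also have "\<dots> = emb (cc q x S) * M x j * cd emb q M (S - {x}) J"
    proof -
      have IH: "(\<Sum>ys\<in>permutations_of_set (S - {x}). emb (eps q ys) * prod_list (map (case_prod M) (zip ys J))) = cd emb q M (S - {x}) J"
        by (rule Cons.IH) (use Cons.prems x in auto)
      show ?thesis unfolding sum_distrib_left[symmetric] IH by (rule refl)
    qed
    finally show "(\<Sum>xs\<in>(\<lambda>xs. x # xs) ` permutations_of_set (S - {x}). emb (eps q xs) * prod_list (map (case_prod M) (zip xs (j # J))))
       = emb (cc q x S) * M x j * cd emb q M (S - {x}) J" .
  qed
  finally show ?case by simp
qed

lemma cdet_cd:
  assumes s: "sorted_wrt (<) I" and l: "length J = length I"
  shows "cdet emb q M I J = cd emb q M (set I) J"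
proof -
  define r where "r = length I"
  define f where "f \<sigma> = map (\<lambda>s. I ! \<sigma> s) [0..<r]" for \<sigma> :: "nat \<Rightarrow> nat"
  define Pm where "Pm = {\<sigma>. \<sigma> permutes {..<r}}"
  have dI: "distinct I" using s strict_sorted_iff by blast
  have mono: "I ! a < I ! b \<longleftrightarrow> a < b" if "a < r" "b < r" for a b
  proof
    assume "a < b" then show "I ! a < I ! b" using s that sorted_wrt_nth_less r_def by blast
  next
    assume h: "I ! a < I ! b"
    show "a < b"
    proof (rule ccontr)
      assume "\<not> a < b"
      then have "b < a \<or> b = a" by auto
      then show False using h s that sorted_wrt_nth_less[of "(<)" I b a] r_def by auto
    qed
  qed
  have P: "\<sigma> s < r" if "\<sigma> \<in> Pm" "s < r" for \<sigma> s
    using that permutes_in_image[of \<sigma> "{..<r}" s] by (auto simp: Pm_def)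
  have injI: "inj_on (\<lambda>s. I ! \<sigma> s) {..<r}" if "\<sigma> \<in> Pm" for \<sigma>
  proof (rule inj_onI)
    fix a b assume ab: "a \<in> {..<r}" "b \<in> {..<r}" "I ! \<sigma> a = I ! \<sigma> b"
    then have "\<sigma> a = \<sigma> b" using dI P[OF that] r_def by (simp add: nth_eq_iff_index_eq)
    then show "a = b" using permutes_inj[of \<sigma> "{..<r}"] that by (auto simp: Pm_def inj_def)
  qed
  have df: "distinct (f \<sigma>)" if "\<sigma> \<in> Pm" for \<sigma>
    unfolding f_def distinct_map using injI[OF that] by (simp add: atLeast0LessThan)
  have lf: "length (f \<sigma>) = r" for \<sigma> by (simp add: f_def)
  have nf: "f \<sigma> ! s = I ! \<sigma> s" if "s < r" for \<sigma> s using that by (simp add: f_def)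
  have trm: "emb (eps_perm q I \<sigma>) * prod_list (map (\<lambda>s. M (I ! \<sigma> s) (J ! s)) [0..<r])
      = emb (eps q (f \<sigma>)) * prod_list (map (case_prod M) (zip (f \<sigma>) J))" if "\<sigma> \<in> Pm" for \<sigma>
  proof -
    have "eps q (f \<sigma>) = (\<Prod>(s,t)\<in>{(s,t). s < t \<and> t < r \<and> f \<sigma> ! s > f \<sigma> ! t}. - q (f \<sigma> ! s) (f \<sigma> ! t))"
      unfolding eps_def using df[OF that] lf by simp
    also have "{(s,t). s < t \<and> t < r \<and> f \<sigma> ! s > f \<sigma> ! t} = {(s,t). s < t \<and> t < r \<and> \<sigma> s > \<sigma> t}"
      using nf mono P[OF that] by auto
    also have "(\<Prod>(s,t)\<in>{(s,t). s < t \<and> t < r \<and> \<sigma> s > \<sigma> t}. - q (f \<sigma> ! s) (f \<sigma> ! t))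
       = eps_perm q I \<sigma>"
      unfolding eps_perm_def r_def[symmetric] by (rule prod.cong) (auto simp: nf)
    finally have e: "eps q (f \<sigma>) = eps_perm q I \<sigma>" .
    have "map (case_prod M) (zip (f \<sigma>) J) = map (\<lambda>s. M (I ! \<sigma> s) (J ! s)) [0..<r]"
      by (rule nth_equalityI) (auto simp: lf l r_def nf)
    then show ?thesis using e by simp
  qed
  have inj: "inj_on f Pm"
  proof (rule inj_onI)
    fix \<sigma> \<tau> assume h: "\<sigma> \<in> Pm" "\<tau> \<in> Pm" "f \<sigma> = f \<tau>"
    show "\<sigma> = \<tau>"
    proof
      fix s show "\<sigma> s = \<tau> s"
      proof (cases "s < r")
        case True
        then have "I ! \<sigma> s = I ! \<tau> s" using h(3) nf by metis
        then show ?thesis using dI P[OF h(1) True] P[OF h(2) True] r_def by (simp add: nth_eq_iff_index_eq)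
      next
        case False
        then have "s \<notin> {..<r}" by simp
        then show ?thesis using h(1,2) permutes_not_in[of \<sigma> "{..<r}" s] permutes_not_in[of \<tau> "{..<r}" s]
          by (simp add: Pm_def)
      qed
    qed
  qed
  have sub: "f ` Pm \<subseteq> permutations_of_set (set I)"
  proof
    fix xs assume "xs \<in> f ` Pm"
    then obtain \<sigma> where \<sigma>: "\<sigma> \<in> Pm" "xs = f \<sigma>" by blast
    have "set (f \<sigma>) = (\<lambda>s. I ! s) ` (\<sigma> ` {..<r})" by (auto simp: f_def)
    also have "\<sigma> ` {..<r} = {..<r}" using \<sigma>(1) permutes_image by (auto simp: Pm_def)
    also have "(\<lambda>s. I ! s) ` {..<r} = set I" by (auto simp: r_def in_set_conv_nth)
    finally show "xs \<in> permutations_of_set (set I)" using df[OF \<sigma>(1)] \<sigma>(2) by (simp add: permutations_of_set_def)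
  qed
  have cardeq: "card (f ` Pm) = card (permutations_of_set (set I))"
    using card_image[OF inj] card_permutations[of "{..<r}" r] distinct_card[OF dI] r_def
    by (simp add: Pm_def)
  have img: "f ` Pm = permutations_of_set (set I)"
    by (rule card_subset_eq[OF _ sub cardeq]) simp
  have "cdet emb q M I J = (\<Sum>\<sigma>\<in>Pm. emb (eps q (f \<sigma>)) * prod_list (map (case_prod M) (zip (f \<sigma>) J)))"
    unfolding cdet_def r_def[symmetric] Pm_def[symmetric] by (rule sum.cong[OF refl]) (rule trm)
  also have "\<dots> = (\<Sum>xs\<in>f ` Pm. emb (eps q xs) * prod_list (map (case_prod M) (zip xs J)))"
    by (subst sum.reindex[OF inj]) simp
  also have "\<dots> = cd emb q M (set I) J" unfolding img
    by (rule LS_cd) (use distinct_card[OF dI] l in auto)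
  finally show ?thesis .
qed

end

lemma ci_set: "set (compl_idx n i) = {1..n} - {i}"
  unfolding compl_idx_def by auto

lemma ci_sorted: "sorted_wrt (<) (compl_idx n i)"
  unfolding compl_idx_def by (rule sorted_wrt_filter) (rule sorted_wrt_upt)

lemma ci_len: assumes "i \<in> {1..n}" shows "length (compl_idx n i) = n - 1"
proof -
  have "distinct (compl_idx n i)" using ci_sorted strict_sorted_iff by blast
  then have "length (compl_idx n i) = card (set (compl_idx n i))" by (simp add: distinct_card)
  also have "\<dots> = n - 1" using assms by (simp add: ci_set)
  finally show ?thesis .
qed

lemma upt_split: assumes "i \<in> {1..n}" shows "[1..<Suc n] = [1..<i] @ i # [Suc i..<Suc n]"
proof -
  have "[1..<Suc n] = [1..<i] @ [i..<Suc n]"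
    using assms upt_add_eq_append[of 1 i "Suc n - i"] by auto
  also have "[i..<Suc n] = i # [Suc i..<Suc n]" using assms by (simp add: upt_conv_Cons)
  finally show ?thesis .
qed

lemma ci_split: assumes "i \<in> {1..n}" shows "compl_idx n i = [1..<i] @ [Suc i..<Suc n]"
  unfolding compl_idx_def upt_split[OF assms] by (auto intro: filter_True)

locale mctx = cam emb for emb :: "complex \<Rightarrow> 'a::ring_1" +
  fixes n :: nat and q p :: "nat \<Rightarrow> nat \<Rightarrow> complex" and M :: "nat \<Rightarrow> nat \<Rightarrow> 'a"
  assumes man: "manin emb n q p M" and pp: "param_matrix n p"
begin

definition br where "br a b x y = M x a * M y b - emb (q y x) * M y a * M x b"

lemma br_dup: assumes "x < y" "x \<in> {1..n}" "y \<in> {1..n}" "k \<in> {1..n}"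
  shows "br k k x y = 0"
  using man assms unfolding manin_def br_def by auto

lemma br_swap: assumes "x < y" "x \<in> {1..n}" "y \<in> {1..n}" "k \<in> {1..n}" "l \<in> {1..n}" "k < l"
  shows "br l k x y = emb (- p l k) * br k l x y"
proof -
  have m: "M x k * M y l - emb (q y x * p k l) * M y l * M x k
          + emb (p k l) * M x l * M y k - emb (q y x) * M y k * M x l = 0"
    using man assms unfolding manin_def by auto
  have pi: "p l k * p k l = 1" using pp assms unfolding param_matrix_def by auto
  have e1: "emb (q y x * p k l) = emb (p k l) * emb (q y x)" by (metis emb_mult mult.commute)
  have "br k l x y = - (emb (p k l) * br l k x y)"
  proof -
    have "emb (p k l) * br l k x y = emb (p k l) * M x l * M y k - emb (q y x * p k l) * M y l * M x k"
      unfolding br_def e1 by (simp only: right_diff_distrib mult.assoc)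
    then show ?thesis using m unfolding br_def by (simp add: algebra_simps)
  qed
  then have "emb (- p l k) * br k l x y = emb (p l k * p k l) * br l k x y"
    by (simp add: emb_minus emb_mult mult.assoc)
  then show ?thesis using pi by simp
qed

lemma cd2: assumes "finite S"
  shows "cd emb q M S (a # b # J) = (\<Sum>(x,y)\<in>{(x,y)\<in>S\<times>S. x < y}.
     emb (cc q x S * cc q y (S - {x})) * br a b x y * cd emb q M (S - {x} - {y}) J)"
proof -
  define H where "H x y = emb (cc q x S * cc q y (S - {x})) * (M x a * M y b) * cd emb q M (S - {x} - {y}) J" for x y
  have "cd emb q M S (a # b # J) = (\<Sum>x\<in>S. \<Sum>y\<in>S-{x}. H x y)"
    by (simp add: H_def sum_distrib_left regroup)
  also have "\<dots> = (\<Sum>(x,y)\<in>{(x,y)\<in>S\<times>S. x < y}. H x y + H y x)"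
    using assms by (rule sum_offdiag)
  also have "\<dots> = (\<Sum>(x,y)\<in>{(x,y)\<in>S\<times>S. x < y}.
     emb (cc q x S * cc q y (S - {x})) * br a b x y * cd emb q M (S - {x} - {y}) J)"
  proof (rule sum.cong[OF refl], clarify)
    fix x y assume xy: "x \<in> S" "y \<in> S" "x < y"
    have R: "S - {y} - {x} = S - {x} - {y}" by auto
    have "H y x = emb (- q y x) * emb (cc q x S * cc q y (S - {x})) * (M y a * M x b) * cd emb q M (S - {x} - {y}) J"
      unfolding H_def R cc_pair[OF assms xy, of q] emb_mult[of "- q y x"] by (rule refl)
    also have "\<dots> = emb (cc q x S * cc q y (S - {x})) * (- (emb (q y x) * M y a * M x b)) * cd emb q M (S - {x} - {y}) J"
    proof -
      have "emb (- q y x) * emb (cc q x S * cc q y (S - {x})) = emb (cc q x S * cc q y (S - {x})) * (- emb (q y x))"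
        by (subst emb_comm) (simp add: emb_minus)
      then show ?thesis by (simp add: mult.assoc)
    qed
    finally show "H x y + H y x = emb (cc q x S * cc q y (S - {x})) * br a b x y * cd emb q M (S - {x} - {y}) J"
      unfolding H_def br_def by (simp add: algebra_simps)
  qed
  finally show ?thesis .
qed

lemma lastcol:
  "finite S \<Longrightarrow> card S = Suc (length J) \<Longrightarrow>
   cd emb q M S (J @ [j]) = (\<Sum>k\<in>S. emb (ee q k S) * cd emb q M (S - {k}) J * M k j)"
proof (induction J arbitrary: S)
  case Nil
  then obtain x where "S = {x}" by (auto simp: card_Suc_eq)
  moreover have "cc q x {x} = 1" unfolding cc_def by (rule prod.neutral) auto
  moreover have "ee q x {x} = 1" unfolding ee_def by (rule prod.neutral) auto
  ultimately show ?case by (simp add: cc_def ee_def)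
next
  case (Cons j0 J)
  define F where "F x k = emb (cc q x S * ee q k (S - {x})) * (M x j0 * cd emb q M (S - {x} - {k}) J) * M k j" for x k
  have "cd emb q M S ((j0 # J) @ [j]) = (\<Sum>x\<in>S. emb (cc q x S) * M x j0 * cd emb q M (S - {x}) (J @ [j]))"
    by simp
  also have "\<dots> = (\<Sum>x\<in>S. \<Sum>k\<in>S-{x}. F x k)"
  proof (rule sum.cong[OF refl])
    fix x assume x: "x \<in> S"
    have "card (S - {x}) = Suc (length J)" using Cons.prems x by simp
    then have "cd emb q M (S - {x}) (J @ [j]) = (\<Sum>k\<in>S-{x}. emb (ee q k (S-{x})) * cd emb q M (S - {x} - {k}) J * M k j)"
      using Cons by simp
    then show "emb (cc q x S) * M x j0 * cd emb q M (S - {x}) (J @ [j]) = (\<Sum>k\<in>S-{x}. F x k)"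
      by (simp add: sum_distrib_left F_def regroup)
  qed
  also have "\<dots> = (\<Sum>k\<in>S. \<Sum>x\<in>S-{k}. F x k)"
    by (rule sum_swap_offdiag) (rule Cons.prems(1))
  also have "\<dots> = (\<Sum>k\<in>S. emb (ee q k S) * cd emb q M (S - {k}) (j0 # J) * M k j)"
  proof (rule sum.cong[OF refl])
    fix k assume k: "k \<in> S"
    have "(\<Sum>x\<in>S-{k}. F x k) = (\<Sum>x\<in>S-{k}. emb (ee q k S) * (emb (cc q x (S - {k})) * M x j0 * cd emb q M (S - {k} - {x}) J) * M k j)"
    proof (rule sum.cong[OF refl])
      fix x assume x: "x \<in> S - {k}"
      have R: "S - {x} - {k} = S - {k} - {x}" by auto
        have E: "cc q x S * ee q k (S - {x}) = ee q k S * cc q x (S - {k})"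
          using cc_ee[of S x k q] Cons.prems(1) x k by auto
        show "F x k = emb (ee q k S) * (emb (cc q x (S - {k})) * M x j0 * cd emb q M (S - {k} - {x}) J) * M k j"
        unfolding F_def R E by (simp add: emb_mult mult.assoc)
    qed
    then show "(\<Sum>x\<in>S-{k}. F x k) = emb (ee q k S) * cd emb q M (S - {k}) (j0 # J) * M k j"
      by (simp add: sum_distrib_left sum_distrib_right)
  qed
  finally show ?case .
qed

lemma swap_help: "emb A * (emb c * X) * R = emb c * (emb A * X * R)"
  by (metis emb_comm mult.assoc)

lemma swap0: assumes "finite S" "S \<subseteq> {1..n}" "k \<in> {1..n}" "l \<in> {1..n}" "k < l"
  shows "cd emb q M S (l # k # J) = emb (- p l k) * cd emb q M S (k # l # J)"
proof -
  have "cd emb q M S (l # k # J) = (\<Sum>(x,y)\<in>{(x,y)\<in>S\<times>S. x < y}.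
     emb (- p l k) * (emb (cc q x S * cc q y (S - {x})) * br k l x y * cd emb q M (S - {x} - {y}) J))"
    unfolding cd2[OF assms(1)]
  proof (rule sum.cong[OF refl], clarify)
    fix x y assume xy: "x \<in> S" "y \<in> S" "x < y"
    have "br l k x y = emb (- p l k) * br k l x y"
      using xy assms by (intro br_swap) auto
    then show "emb (cc q x S * cc q y (S - {x})) * br l k x y * cd emb q M (S - {x} - {y}) J =
         emb (- p l k) * (emb (cc q x S * cc q y (S - {x})) * br k l x y * cd emb q M (S - {x} - {y}) J)"
      by (simp add: swap_help)
  qed
  also have "\<dots> = emb (- p l k) * cd emb q M S (k # l # J)"
    unfolding cd2[OF assms(1)] by (simp add: sum_distrib_left split_def)
  finally show ?thesis .
qed

lemma dup0: assumes "finite S" "S \<subseteq> {1..n}" "k \<in> {1..n}"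
  shows "cd emb q M S (k # k # J) = emb 0 * cd emb q M S (k # k # J)"
proof -
  have "cd emb q M S (k # k # J) = 0"
    unfolding cd2[OF assms(1)]
  proof (rule sum.neutral, clarify)
    fix a b assume "a \<in> S" "b \<in> S" "a < b"
    then have "br k k a b = 0" using assms by (intro br_dup) auto
    then show "emb (cc q a S * cc q b (S - {a})) * br k k a b * cd emb q M (S - {a} - {b}) J = 0" by simp
  qed
  then show ?thesis by simp
qed

lemma lift:
  assumes H: "\<And>S. finite S \<Longrightarrow> S \<subseteq> {1..n} \<Longrightarrow> cd emb q M S A = emb c * cd emb q M S B"
  shows "finite S \<Longrightarrow> S \<subseteq> {1..n} \<Longrightarrow> cd emb q M S (J1 @ A) = emb c * cd emb q M S (J1 @ B)"
proof (induction J1 arbitrary: S)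
  case Nil
  then show ?case using H by simp
next
  case (Cons j J1)
  have "cd emb q M S ((j # J1) @ A) = (\<Sum>x\<in>S. emb c * (emb (cc q x S) * M x j * cd emb q M (S - {x}) (J1 @ B)))"
  proof (simp, rule sum.cong[OF refl])
    fix x assume "x \<in> S"
    have "cd emb q M (S - {x}) (J1 @ A) = emb c * cd emb q M (S - {x}) (J1 @ B)"
      using Cons by auto
    then show "emb (cc q x S) * M x j * cd emb q M (S - {x}) (J1 @ A) = emb c * (emb (cc q x S) * M x j * cd emb q M (S - {x}) (J1 @ B))"
      by (metis emb_lcomm)
  qed
  also have "\<dots> = emb c * cd emb q M S ((j # J1) @ B)" by (simp add: sum_distrib_left)
  finally show ?case .
qed

lemma swapJ: assumes "finite S" "S \<subseteq> {1..n}" "k \<in> {1..n}" "l \<in> {1..n}" "k \<noteq> l"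
  shows "cd emb q M S (J1 @ l # k # J) = emb (- p l k) * cd emb q M S (J1 @ k # l # J)"
proof (cases "k < l")
  case True
  show ?thesis by (rule lift[OF swap0]) (use assms True in auto)
next
  case False
  then have lk: "l < k" using assms by auto
  have 1: "cd emb q M S (J1 @ k # l # J) = emb (- p k l) * cd emb q M S (J1 @ l # k # J)"
    by (rule lift[OF swap0]) (use assms lk in auto)
  have "p l k * p k l = 1" using pp assms unfolding param_matrix_def by auto
  then have "emb (- p l k) * emb (- p k l) = 1" by (simp add: emb_mult[symmetric])
  then show ?thesis unfolding 1 by (simp add: mult.assoc[symmetric])
qed

lemma dupJ: assumes "finite S" "S \<subseteq> {1..n}" "k \<in> {1..n}"
  shows "cd emb q M S (J1 @ k # k # J) = 0"
proof -
  have "cd emb q M S (J1 @ k # k # J) = emb 0 * cd emb q M S (J1 @ k # k # J)"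
    by (rule lift) (use dup0 assms in auto)
  then show ?thesis by simp
qed

lemma move:
  assumes "finite S" "S \<subseteq> {1..n}" "x \<in> {1..n}" "set B \<subseteq> {1..n}" "x \<notin> set B"
  shows "cd emb q M S (A @ x # B @ C) = emb (prod_list (map (\<lambda>b. - p x b) B)) * cd emb q M S (A @ B @ x # C)"
  using assms(4,5)
proof (induction B arbitrary: A)
  case Nil
  then show ?case by simp
next
  case (Cons b B)
  have "cd emb q M S (A @ x # b # (B @ C)) = emb (- p x b) * cd emb q M S (A @ b # x # (B @ C))"
    by (rule swapJ) (use assms Cons.prems in auto)
  also have "cd emb q M S (A @ b # x # (B @ C)) = cd emb q M S ((A @ [b]) @ x # B @ C)" by simp
  also have "\<dots> = emb (prod_list (map (\<lambda>b. - p x b) B)) * cd emb q M S ((A @ [b]) @ B @ x # C)"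
    using Cons.IH[of "A @ [b]"] Cons.prems by auto
  finally show ?case by (simp add: emb_mult[symmetric] mult.assoc[symmetric])
qed

lemma dupcol:
  assumes "finite S" "S \<subseteq> {1..n}" "set A \<subseteq> {1..n}" "j \<in> set A"
  shows "cd emb q M S (A @ [j]) = 0"
proof -
  obtain A1 A2 where A: "A = A1 @ j # A2" "j \<notin> set A2"
    using split_list_last[OF assms(4)] by blast
  have "cd emb q M S (A1 @ j # A2 @ [j]) = emb (prod_list (map (\<lambda>b. - p j b) A2)) * cd emb q M S (A1 @ A2 @ j # [j])"
    by (rule move) (use assms A in auto)
  also have "cd emb q M S (A1 @ A2 @ j # [j]) = cd emb q M S ((A1 @ A2) @ j # j # [])" by simp
  also have "\<dots> = 0" by (rule dupJ) (use assms A in auto)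
  finally show ?thesis using A by simp
qed

lemma ee_nz: assumes "i \<in> {1..n}" shows "ee p i {1..n} \<noteq> 0"
  unfolding ee_def using pp assms by (auto simp: param_matrix_def)

lemma col_self: assumes i: "i \<in> {1..n}"
  shows "cd emb q M {1..n} (compl_idx n i @ [i]) = emb (ee p i {1..n}) * cd emb q M {1..n} [1..<Suc n]"
proof -
  let ?B = "[Suc i..<Suc n]"
  have "cd emb q M {1..n} [1..<Suc n] = cd emb q M {1..n} ([1..<i] @ i # ?B @ [])"
    using upt_split[OF i] by simp
  also have "\<dots> = emb (prod_list (map (\<lambda>b. - p i b) ?B)) * cd emb q M {1..n} ([1..<i] @ ?B @ [i])"
    by (rule move) (use i in auto)
  also have "[1..<i] @ ?B @ [i] = compl_idx n i @ [i]" using ci_split[OF i] by simp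
  finally have D: "cd emb q M {1..n} [1..<Suc n] = emb (prod_list (map (\<lambda>b. - p i b) ?B)) * cd emb q M {1..n} (compl_idx n i @ [i])" .
  have Q: "prod_list (map (\<lambda>b. - p i b) ?B) = (\<Prod>b\<in>{z\<in>{1..n}. i < z}. - p i b)"
  proof -
    have "{z\<in>{1..n}. i < z} = set ?B" using i by auto
    moreover have "(\<Prod>b\<in>set ?B. - p i b) = prod_list (map (\<lambda>b. - p i b) ?B)"
      by (rule prod.distinct_set_conv_list) simp
    ultimately show ?thesis by simp
  qed
  have "ee p i {1..n} * prod_list (map (\<lambda>b. - p i b) ?B) = (\<Prod>b\<in>{z\<in>{1..n}. i < z}. p b i * p i b)"
    unfolding ee_def Q prod.distrib[symmetric] by simp
  also have "\<dots> = 1" using pp i by (intro prod.neutral) (auto simp: param_matrix_def)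
  finally have "emb (ee p i {1..n}) * emb (prod_list (map (\<lambda>b. - p i b) ?B)) = 1"
    by (simp add: emb_mult[symmetric])
  then show ?thesis unfolding D by (simp add: mult.assoc[symmetric])
qed

lemma col_other: assumes "i \<in> {1..n}" "j \<in> {1..n}" "i \<noteq> j"
  shows "cd emb q M {1..n} (compl_idx n i @ [j]) = 0"
  by (rule dupcol) (use assms in \<open>auto simp: ci_set\<close>)

definition adj where
  "adj i k = emb (inverse (ee p i {1..n}) * ee q k {1..n}) * cd emb q M ({1..n} - {k}) (compl_idx n i)"

lemma adj_mult: assumes i: "i \<in> {1..n}" and j: "j \<in> {1..n}"
  shows "(\<Sum>k=1..n. adj i k * M k j) = (if i = j then cd emb q M {1..n} [1..<Suc n] else 0)"
proof -
  have E1: "(\<Sum>k=1..n. adj i k * M k j) = emb (inverse (ee p i {1..n})) *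
      (\<Sum>k\<in>{1..n}. emb (ee q k {1..n}) * cd emb q M ({1..n} - {k}) (compl_idx n i) * M k j)"
    unfolding adj_def by (simp add: sum_distrib_left emb_mult mult.assoc)
  have E2: "(\<Sum>k\<in>{1..n}. emb (ee q k {1..n}) * cd emb q M ({1..n} - {k}) (compl_idx n i) * M k j)
      = cd emb q M {1..n} (compl_idx n i @ [j])"
    by (rule lastcol[symmetric]) (use i ci_len[OF i] in auto)
  have E: "(\<Sum>k=1..n. adj i k * M k j) = emb (inverse (ee p i {1..n})) * cd emb q M {1..n} (compl_idx n i @ [j])"
    using E1 E2 by simp
  show ?thesis
  proof (cases "i = j")
    case True
    have "emb (inverse (ee p i {1..n})) * (emb (ee p i {1..n}) * cd emb q M {1..n} [1..<Suc n])
       = (emb (inverse (ee p i {1..n})) * emb (ee p i {1..n})) * cd emb q M {1..n} [1..<Suc n]"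
      by (rule mult.assoc[symmetric])
    also have "\<dots> = cd emb q M {1..n} [1..<Suc n]" using emb_inv[OF ee_nz[OF i]] by simp
    finally show ?thesis using E col_self[OF i] True by simp
  next
    case False
    then show ?thesis using E col_other[OF i j] by simp
  qed
qed

end

theorem mainTheorem4:
  fixes emb :: "complex \<Rightarrow> 'a::ring_1"
    and n :: nat
    and q p :: "nat \<Rightarrow> nat \<Rightarrow> complex"
    and M N :: "nat \<Rightarrow> nat \<Rightarrow> 'a"
    and d :: 'a
  assumes "complex_algebra_map emb"
    and "param_matrix n q" and "param_matrix n p"
    and "manin emb n q p M"
    and "inverse_mat n M N"
    and "d * cdet emb q M [1..<Suc n] [1..<Suc n] = 1"
    and "cdet emb q M [1..<Suc n] [1..<Suc n] * d = 1"
    and "i \<in> {1..n}" and "j \<in> {1..n}"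
  shows "N i j = emb (inverse (eps p (compl_idx n i @ [i])) * eps q (compl_idx n j @ [j]))
                 * d * cdet emb q M (compl_idx n j) (compl_idx n i)"
proof -
  interpret mctx emb n q p M
    using assms(1,3,4) by (simp add: mctx_def cam_def mctx_axioms_def)
  note i = assms(8) and j = assms(9)
  have Dcd: "cdet emb q M [1..<Suc n] [1..<Suc n] = cd emb q M {1..n} [1..<Suc n]"
  proof -
    have "cdet emb q M [1..<Suc n] [1..<Suc n] = cd emb q M (set [1..<Suc n]) [1..<Suc n]"
      by (rule cdet_cd) (rule sorted_wrt_upt, rule refl)
    moreover have "set [1..<Suc n] = {1..n}" by auto
    ultimately show ?thesis by (simp only:)
  qed
  have dD: "d * cd emb q M {1..n} [1..<Suc n] = 1" using assms(6) Dcd by simp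
  have MN: "(\<Sum>k=1..n. M l k * N k j) = (if l = j then 1 else 0)" if "l \<in> {1..n}" for l
    using assms(5) that j unfolding inverse_mat_def by blast
  have NM: "(\<Sum>k=1..n. N i k * M k l) = (if i = l then 1 else 0)" if "l \<in> {1..n}" for l
    using assms(5) that i unfolding inverse_mat_def by blast
  have "(\<Sum>k=1..n. (if i = k then 1 else 0) * N k j) = (\<Sum>k\<in>{1..n}. if i = k then N k j else 0)"
    by (rule sum.cong) simp_all
  also have "\<dots> = N i j" using i by (simp add: sum.delta)
  finally have "N i j = (\<Sum>k=1..n. (if i = k then 1 else 0) * N k j)" by simp
  also have "\<dots> = (\<Sum>k=1..n. (d * (\<Sum>l=1..n. adj i l * M l k)) * N k j)"
    by (rule sum.cong[OF refl]) (use adj_mult[OF i] dD in auto)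
  also have "\<dots> = (\<Sum>k=1..n. \<Sum>l=1..n. d * (adj i l * (M l k * N k j)))"
    by (simp add: sum_distrib_left sum_distrib_right mult.assoc)
  also have "\<dots> = (\<Sum>l=1..n. \<Sum>k=1..n. d * (adj i l * (M l k * N k j)))"
    by (rule sum.swap)
  also have "\<dots> = (\<Sum>l=1..n. d * (adj i l * (if l = j then 1 else 0)))"
  proof (rule sum.cong[OF refl])
    fix l assume l: "l \<in> {1..n}"
    show "(\<Sum>k=1..n. d * (adj i l * (M l k * N k j))) = d * (adj i l * (if l = j then 1 else 0))"
      unfolding sum_distrib_left[symmetric] MN[OF l] by (rule refl)
  qed
  also have "\<dots> = (\<Sum>l\<in>{1..n}. if l = j then d * adj i j else 0)"
    by (rule sum.cong) simp_all
  also have "\<dots> = d * adj i j" using j by (simp add: sum.delta')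
  also have "\<dots> = emb (inverse (ee p i {1..n}) * ee q j {1..n}) * d * cd emb q M ({1..n} - {j}) (compl_idx n i)"
  proof -
    have c: "d * emb (inverse (ee p i {1..n}) * ee q j {1..n}) = emb (inverse (ee p i {1..n}) * ee q j {1..n}) * d"
      by (rule emb_comm[symmetric])
    show ?thesis unfolding adj_def mult.assoc[symmetric] c by (rule refl)
  qed
  also have "ee p i {1..n} = eps p (compl_idx n i @ [i])"
  proof -
    have "eps p (compl_idx n i @ [i]) = ee p i (set (compl_idx n i))" by (rule eps_snoc) (simp_all add: ci_sorted ci_set)
    then show ?thesis by (simp add: ci_set ee_notin)
  qed
  also have "ee q j {1..n} = eps q (compl_idx n j @ [j])"
  proof -
    have "eps q (compl_idx n j @ [j]) = ee q j (set (compl_idx n j))" by (rule eps_snoc) (simp_all add: ci_sorted ci_set)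
    then show ?thesis by (simp add: ci_set ee_notin)
  qed
  also have "cd emb q M ({1..n} - {j}) (compl_idx n i) = cdet emb q M (compl_idx n j) (compl_idx n i)"
  proof -
    have "cdet emb q M (compl_idx n j) (compl_idx n i) = cd emb q M (set (compl_idx n j)) (compl_idx n i)"
      by (rule cdet_cd) (simp_all add: ci_sorted ci_len[OF i] ci_len[OF j])
    then show ?thesis by (simp add: ci_set)
  qed
  finally show ?thesis .
qed

end
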